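(* For any $n\ge 1$, the poset $(\mathsf{Tr}(n),\preccurlyeq)$ is a lattice, and for $u,v\in\mathsf{Tr}(n)$ the join of $u$ and $v$ is the word $\max(u_1,v_1)\max(u_2,v_2)\cdots\max(u_n,v_n)$.
   Context: A triword of size $n$ is a word $u=u_1\cdots u_n$ with $u_i\in\{0,1,2\}$, $u_1\ne 2$, and such that $u_i=0$ implies $u_j\neq 1$ for all $j>i$; $\mathsf{Tr}(n)$ is their set, ordered componentwise: $u\preccurlyeq v$ iff $u_i\le v_i$ for all $i\in[n]$. *)

theory Defs
  imports Main "HOL-Algebra.Lattice"
begin

text \<open>A word u_1...u_n is represented by a list of naturals of length n;
  the letter u_i is u ! (i - 1).\<close>

definition Tr :: "nat \<Rightarrow> nat list set" where
  "Tr n = {u. length u = n \<and> set u \<subseteq> {0, 1, 2}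
              \<and> (0 < n \<longrightarrow> u ! 0 \<noteq> 2)
              \<and> (\<forall>i j. i < j \<and> j < n \<and> u ! i = 0 \<longrightarrow> u ! j \<noteq> 1)}"

definition tw_le :: "nat \<Rightarrow> nat list \<Rightarrow> nat list \<Rightarrow> bool" where
  "tw_le n u v = (\<forall>i < n. u ! i \<le> v ! i)"

definition Tr_poset :: "nat \<Rightarrow> nat list gorder" where
  "Tr_poset n = \<lparr> carrier = Tr n, eq = (=), le = tw_le n \<rparr>"

end

theory Submission
  imports Defs
begin

definition jn :: "nat \<Rightarrow> nat list \<Rightarrow> nat list \<Rightarrow> nat list" where
  "jn n u v = map (\<lambda>i. max (u ! i) (v ! i)) [0..<n]"

definition mt :: "nat \<Rightarrow> nat list \<Rightarrow> nat list \<Rightarrow> nat list" where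
  "mt n u v = map (\<lambda>i. if min (u ! i) (v ! i) = 1 \<and> (\<exists>k<i. min (u ! k) (v ! k) = 0) then 0
                       else min (u ! i) (v ! i)) [0..<n]"

lemma Tr_iff: "u \<in> Tr n \<longleftrightarrow> length u = n \<and> (\<forall>i<n. u ! i \<le> 2)
   \<and> (0 < n \<longrightarrow> u ! 0 \<noteq> 2) \<and> (\<forall>i j. i < j \<and> j < n \<and> u ! i = 0 \<longrightarrow> u ! j \<noteq> 1)"
proof -
  have "set u \<subseteq> {0,1,2} \<longleftrightarrow> (\<forall>i<length u. u ! i \<le> (2::nat))"
    by (auto simp: in_set_conv_nth subset_iff)
  then show ?thesis unfolding Tr_def by auto
qed

lemma jn_Tr: assumes "u \<in> Tr n" "v \<in> Tr n" shows "jn n u v \<in> Tr n"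
proof -
  have A: "\<forall>i<n. jn n u v ! i \<le> 2" using assms unfolding Tr_iff jn_def by auto
  have B: "0 < n \<longrightarrow> jn n u v ! 0 \<noteq> 2" using assms unfolding Tr_iff jn_def
    by (auto simp: max_def)
  have C: "\<forall>i j. i < j \<and> j < n \<and> jn n u v ! i = 0 \<longrightarrow> jn n u v ! j \<noteq> 1"
  proof (intro allI impI)
    fix i j assume h: "i < j \<and> j < n \<and> jn n u v ! i = 0"
    then have "u ! i = 0" "v ! i = 0" unfolding jn_def by auto
    then have "u ! j \<noteq> 1" "v ! j \<noteq> 1" using assms h unfolding Tr_iff by auto
    then show "jn n u v ! j \<noteq> 1" using h unfolding jn_def by (simp add: max_def)
  qed
  show ?thesis using A B C unfolding Tr_iff by (simp add: jn_def)
qed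

lemma mt_Tr: assumes "u \<in> Tr n" "v \<in> Tr n" shows "mt n u v \<in> Tr n"
proof -
  have "\<forall>i<n. mt n u v ! i \<le> 2" using assms unfolding Tr_iff mt_def by (auto simp: min_def)
  moreover have "0 < n \<longrightarrow> mt n u v ! 0 \<noteq> 2" using assms unfolding Tr_iff mt_def
    by (auto simp: min_def)
  moreover have "\<forall>i j. i < j \<and> j < n \<and> mt n u v ! i = 0 \<longrightarrow> mt n u v ! j \<noteq> 1"
  proof (intro allI impI)
    fix i j assume h: "i < j \<and> j < n \<and> mt n u v ! i = 0"
    show "mt n u v ! j \<noteq> 1"
    proof
      assume j1: "mt n u v ! j = 1"
      have a: "min (u ! j) (v ! j) = 1" "\<not> (\<exists>k<j. min (u ! k) (v ! k) = 0)"
        using j1 h unfolding mt_def by (auto split: if_splits)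
      have "min (u ! i) (v ! i) = 0 \<or> (\<exists>k<i. min (u ! k) (v ! k) = 0)"
        using h unfolding mt_def by (auto split: if_splits)
      then show False using a h by (meson less_trans)
    qed
  qed
  ultimately show ?thesis unfolding Tr_iff by (simp add: mt_def)
qed

lemma mt_glb: assumes "u \<in> Tr n" "v \<in> Tr n" "w \<in> Tr n" "tw_le n w u" "tw_le n w v"
  shows "tw_le n w (mt n u v)"
  unfolding tw_le_def
proof (intro allI impI)
  fix i assume i: "i < n"
  have wm: "\<And>k. k < n \<Longrightarrow> w ! k \<le> min (u ! k) (v ! k)"
    using assms(4,5) unfolding tw_le_def by auto
  show "w ! i \<le> mt n u v ! i"
  proof (cases "min (u ! i) (v ! i) = 1 \<and> (\<exists>k<i. min (u ! k) (v ! k) = 0)")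
    case True
    then obtain k where k: "k < i" "min (u ! k) (v ! k) = 0" by auto
    have "w ! k = 0" using wm[of k] k i by simp
    then have "w ! i \<noteq> 1" using assms(3) k i unfolding Tr_iff by auto
    moreover have "w ! i \<le> 1" using wm[OF i] True by simp
    ultimately show ?thesis using True i by (simp add: mt_def)
  next
    case False
    then have "mt n u v ! i = min (u ! i) (v ! i)" using i by (simp add: mt_def)
    then show ?thesis using wm[OF i] by simp
  qed
qed

lemma mt_lb: "tw_le n (mt n u v) u \<and> tw_le n (mt n u v) v"
  unfolding tw_le_def mt_def by auto

lemma jn_ub: "tw_le n u (jn n u v) \<and> tw_le n v (jn n u v)"
  unfolding tw_le_def jn_def by auto

lemma jn_lub: "tw_le n u w \<Longrightarrow> tw_le n v w \<Longrightarrow> tw_le n (jn n u v) w"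
  unfolding tw_le_def jn_def by auto

lemma po: "partial_order (Tr_poset n)"
proof -
  have anti: "\<And>x y. tw_le n x y \<Longrightarrow> tw_le n y x \<Longrightarrow> x \<in> Tr n \<Longrightarrow> y \<in> Tr n \<Longrightarrow> x = y"
    unfolding tw_le_def Tr_iff by (metis le_antisym nth_equalityI)
  show ?thesis
    by unfold_locales (auto simp: Tr_poset_def tw_le_def intro: anti order_trans)
qed

lemma least_jn: assumes "u \<in> Tr n" "v \<in> Tr n"
  shows "least (Tr_poset n) (jn n u v) (Upper (Tr_poset n) {u, v})"
  using assms jn_Tr[OF assms] jn_ub[of n u v] jn_lub[of n u _ v]
  unfolding least_def Upper_def by (auto simp: Tr_poset_def)

lemma greatest_mt: assumes "u \<in> Tr n" "v \<in> Tr n"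
  shows "greatest (Tr_poset n) (mt n u v) (Lower (Tr_poset n) {u, v})"
  using assms mt_Tr[OF assms] mt_lb[of n u v] mt_glb[of u n v]
  unfolding greatest_def Lower_def by (auto simp: Tr_poset_def)

theorem mainTheorem5:
  fixes n :: nat
  assumes "1 \<le> n"
  shows "lattice (Tr_poset n) \<and>
         (\<forall>u \<in> Tr n. \<forall>v \<in> Tr n.
            join (Tr_poset n) u v = map (\<lambda>i. max (u ! i) (v ! i)) [0..<n])"
proof
  interpret partial_order "Tr_poset n" by (rule po)
  show "lattice (Tr_poset n)"
    apply unfold_locales
    using least_jn greatest_mt by (auto simp: Tr_poset_def) blast+
  show "\<forall>u \<in> Tr n. \<forall>v \<in> Tr n.
            join (Tr_poset n) u v = map (\<lambda>i. max (u ! i) (v ! i)) [0..<n]"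
  proof (intro ballI)
    fix u v assume uv: "u \<in> Tr n" "v \<in> Tr n"
    have "join (Tr_poset n) u v = jn n u v"
      unfolding join_def sup_def
      by (rule some_equality, rule least_jn[OF uv], rule least_unique[OF _ least_jn[OF uv]])
    then show "join (Tr_poset n) u v = map (\<lambda>i. max (u ! i) (v ! i)) [0..<n]"
      by (simp add: jn_def)
  qed
qed

end
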